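(* Let $G=\mathrm{GL}_n(q)$ with natural module $V=\langle e_1,\dots,e_n\rangle_{\mathbb{F}_q}$, $1\le j\le n-1$, $P=\mathrm{Stab}_G(\langle e_1,\dots,e_j\rangle)$ with Levi subgroup $L=G_j\times G_{n-j}$, where $G_j=\mathrm{GL}(\langle e_1,\dots,e_j\rangle)$ and $G_{n-j}=\mathrm{GL}(\langle e_{j+1},\dots,e_n\rangle)$. Then the Harish-Chandra induction satisfies $$R^G_L(\mathrm{reg}_{G_j}\otimes 1_{G_{n-j}})=\prod_{i=0}^{j-1}(\tau_n-q^i\cdot 1_G).$$
   Context: $\tau_n(g)=q^{\dim_{\mathbb{F}_q}\mathrm{Ker}(g-1_V)}$ is the permutation character of $G$ on the vectors of $V$; $\mathrm{reg}_H$ is the regular character of $H$; $R^G_L$ is Harish-Chandra induction (inflate from $L$ to $P$, then induce to $G$). *)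

theory Defs
  imports "Jordan_Normal_Form.Matrix" Complex_Main
begin

text \<open>Matrices over a finite field 'a (so q = CARD('a)); V = 'a^n as column vectors
  carrier_vec n with standard basis e_1..e_n (indices 0..n-1).\<close>

definition GLn :: "nat \<Rightarrow> ('a::{finite,field}) mat set" where
  "GLn n = {A \<in> carrier_mat n n. invertible_mat A}"

definition ginv :: "nat \<Rightarrow> 'a::{finite,field} mat \<Rightarrow> 'a mat" where
  "ginv n A = (THE B. B \<in> carrier_mat n n \<and> A * B = 1\<^sub>m n \<and> B * A = 1\<^sub>m n)"

text \<open>P = stabiliser of span(e_1..e_j): block upper triangular matrices.\<close>
definition parabolic :: "nat \<Rightarrow> nat \<Rightarrow> 'a::{finite,field} mat set" where
  "parabolic n j = {A \<in> GLn n. \<forall>i k. j \<le> i \<and> i < n \<and> k < j \<longrightarrow> A $$ (i, k) = 0}"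

definition blockTL :: "nat \<Rightarrow> 'a mat \<Rightarrow> 'a mat" where
  "blockTL j A = mat j j (\<lambda>(i, k). A $$ (i, k))"

definition blockBR :: "nat \<Rightarrow> nat \<Rightarrow> 'a mat \<Rightarrow> 'a mat" where
  "blockBR n j A = mat (n - j) (n - j) (\<lambda>(i, k). A $$ (i + j, k + j))"

definition reg_GL :: "nat \<Rightarrow> 'a::{finite,field} mat \<Rightarrow> complex" where
  "reg_GL m A = (if A = 1\<^sub>m m then of_nat (card (GLn m :: 'a mat set)) else 0)"

definition triv_char :: "'a mat \<Rightarrow> complex" where
  "triv_char A = 1"

definition tensor_char :: "('a mat \<Rightarrow> complex) \<Rightarrow> ('a mat \<Rightarrow> complex) \<Rightarrow> 'a mat \<times> 'a mat \<Rightarrow> complex" where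
  "tensor_char \<chi> \<psi> = (\<lambda>(A, D). \<chi> A * \<psi> D)"

definition inflate :: "nat \<Rightarrow> nat \<Rightarrow> ('a mat \<times> 'a mat \<Rightarrow> complex) \<Rightarrow> 'a mat \<Rightarrow> complex" where
  "inflate n j \<psi> p = \<psi> (blockTL j p, blockBR n j p)"

definition induce :: "nat \<Rightarrow> nat \<Rightarrow> ('a::{finite,field} mat \<Rightarrow> complex) \<Rightarrow> 'a mat \<Rightarrow> complex" where
  "induce n j \<chi> g = (1 / of_nat (card (parabolic n j :: 'a mat set))) *
     (\<Sum>x\<in>GLn n. (let h = x * g * ginv n x in if h \<in> parabolic n j then \<chi> h else 0))"

definition HC_ind :: "nat \<Rightarrow> nat \<Rightarrow> ('a::{finite,field} mat \<times> 'a mat \<Rightarrow> complex) \<Rightarrow> 'a mat \<Rightarrow> complex" where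
  "HC_ind n j \<psi> = induce n j (inflate n j \<psi>)"

text \<open>Permutation character of G on the vectors of V (= q^dim Ker(g-1)).\<close>
definition tau :: "nat \<Rightarrow> 'a::{finite,field} mat \<Rightarrow> complex" where
  "tau n g = of_nat (card {v \<in> carrier_vec n. g *\<^sub>v v = v})"

end

theory Submission
  imports Defs "Jordan_Normal_Form.Determinant"
begin

lemma moc_index:
  assumes r: "r < n" and c: "c \<in> carrier_vec (length ts)"
  shows "(mat_of_cols n ts *\<^sub>v c) $ r = (\<Sum>k<length ts. ts!k $ r * c$k)"
proof -
  have "(mat_of_cols n ts *\<^sub>v c) $ r = row (mat_of_cols n ts) r \<bullet> c"
    using r by simp
  also have "\<dots> = (\<Sum>k\<in>{0..<length ts}. row (mat_of_cols n ts) r $ k * c$k)"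
    using c by (simp add: scalar_prod_def)
  also have "\<dots> = (\<Sum>k<length ts. ts!k $ r * c$k)"
    unfolding atLeast0LessThan using r by (intro sum.cong) (auto simp: mat_of_cols_index)
  finally show ?thesis .
qed

lemma card_carrier_vec: "card (carrier_vec m :: 'a::finite vec set) = card (UNIV :: 'a set) ^ m"
proof -
  have b: "bij_betw list_of_vec (carrier_vec m :: 'a vec set) {xs. set xs \<subseteq> UNIV \<and> length xs = m}"
  proof (rule bij_betw_byWitness[where f'=vec_of_list])
    show "\<forall>a\<in>carrier_vec m. vec_of_list (list_of_vec a) = (a :: 'a vec)" by (simp add: vec_list)
    show "\<forall>a'\<in>{xs. set xs \<subseteq> UNIV \<and> length xs = m}. list_of_vec (vec_of_list a') = (a' :: 'a list)"
      by (simp add: list_vec)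
    show "list_of_vec ` carrier_vec m \<subseteq> {xs. set xs \<subseteq> (UNIV :: 'a set) \<and> length xs = m}"
    proof (rule image_subsetI)
      fix x :: "'a vec" assume "x \<in> carrier_vec m"
      then have "dim_vec x = m" by (rule carrier_vecD)
      then show "list_of_vec x \<in> {xs. set xs \<subseteq> (UNIV :: 'a set) \<and> length xs = m}"
        by (simp only: mem_Collect_eq length_list_of_vec subset_UNIV simp_thms)
    qed
    show "vec_of_list ` {xs. set xs \<subseteq> (UNIV :: 'a set) \<and> length xs = m} \<subseteq> carrier_vec m"
    proof (rule image_subsetI)
      fix x :: "'a list" assume "x \<in> {xs. set xs \<subseteq> (UNIV :: 'a set) \<and> length xs = m}"
      then have "length x = m" by (simp only: mem_Collect_eq)
      then show "vec_of_list x \<in> carrier_vec m" by (intro carrier_vecI) (simp only: dim_vec_of_list)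
    qed
  qed
  show ?thesis using bij_betw_same_card[OF b] card_lists_length_eq[of "UNIV :: 'a set" m] by simp
qed

lemma finite_carrier_vec[simp]: "finite (carrier_vec m :: 'a::finite vec set)"
  by (rule card_ge_0_finite) (simp add: card_carrier_vec finite_UNIV_card_ge_0)

lemma finite_carrier_mat[simp]: "finite (carrier_mat n m :: 'a::finite mat set)"
proof -
  have sub: "carrier_mat n m \<subseteq> mat_of_cols n ` {ts. set ts \<subseteq> (carrier_vec n :: 'a vec set) \<and> length ts = m}"
  proof
    fix A :: "'a mat" assume A: "A \<in> carrier_mat n m"
    then have "A = mat_of_cols n (cols A)" using mat_of_cols_cols[of A] by simp
    moreover have "set (cols A) \<subseteq> carrier_vec n" "length (cols A) = m" using A by (auto simp: cols_def)
    ultimately show "A \<in> mat_of_cols n ` {ts. set ts \<subseteq> carrier_vec n \<and> length ts = m}" by blast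
  qed
  have "finite {ts. set ts \<subseteq> (carrier_vec n :: 'a vec set) \<and> length ts = m}"
    by (rule finite_lists_length_eq) simp
  then have "finite (mat_of_cols n ` {ts. set ts \<subseteq> (carrier_vec n :: 'a vec set) \<and> length ts = m})"
    by (rule finite_imageI)
  then show ?thesis by (rule finite_subset[OF sub])
qed

lemma card_ge2: "2 \<le> card (UNIV :: 'a::{finite,field} set)"
proof -
  have "card {0::'a, 1} = 2" by simp
  moreover have "card {0::'a, 1} \<le> card (UNIV :: 'a set)" by (rule card_mono) auto
  ultimately show ?thesis by simp
qed

definition lspan :: "nat \<Rightarrow> 'a::field vec list \<Rightarrow> 'a vec set" where
  "lspan n ts = (\<lambda>c. mat_of_cols n ts *\<^sub>v c) ` carrier_vec (length ts)"

definition indep :: "nat \<Rightarrow> 'a::field vec list \<Rightarrow> bool" where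
  "indep n ts \<longleftrightarrow> (\<forall>c \<in> carrier_vec (length ts). mat_of_cols n ts *\<^sub>v c = 0\<^sub>v n \<longrightarrow> c = 0\<^sub>v (length ts))"

definition subsp :: "nat \<Rightarrow> 'a::field vec set \<Rightarrow> bool" where
  "subsp n K \<longleftrightarrow> K \<subseteq> carrier_vec n \<and> 0\<^sub>v n \<in> K \<and> (\<forall>u\<in>K. \<forall>v\<in>K. u + v \<in> K) \<and> (\<forall>a. \<forall>v\<in>K. a \<cdot>\<^sub>v v \<in> K)"

definition tuples :: "nat \<Rightarrow> nat \<Rightarrow> 'a::field vec set \<Rightarrow> 'a vec list set" where
  "tuples n i K = {ts. length ts = i \<and> set ts \<subseteq> K \<and> indep n ts}"

lemma moc_snoc:
  fixes v :: "'a::field vec"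
  assumes v: "v \<in> carrier_vec n" and c: "c \<in> carrier_vec (Suc (length ts))"
  shows "mat_of_cols n (ts@[v]) *\<^sub>v c = mat_of_cols n ts *\<^sub>v vec (length ts) (\<lambda>k. c$k) + c$(length ts) \<cdot>\<^sub>v v"
proof (rule eq_vecI)
  fix r assume "r < dim_vec (mat_of_cols n ts *\<^sub>v vec (length ts) (\<lambda>k. c$k) + c$(length ts) \<cdot>\<^sub>v v)"
  hence r: "r < n" using v by simp
  have "(mat_of_cols n (ts@[v]) *\<^sub>v c) $ r = (\<Sum>k<Suc (length ts). (ts@[v])!k $ r * c$k)"
    using moc_index[OF r, of c "ts@[v]"] c by simp
  also have "\<dots> = (\<Sum>k<length ts. (ts@[v])!k $ r * c$k) + v$r * c$(length ts)"
    by simp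
  also have "(\<Sum>k<length ts. (ts@[v])!k $ r * c$k) = (\<Sum>k<length ts. ts!k $ r * vec (length ts) (\<lambda>k. c$k) $ k)"
    by (rule sum.cong) (auto simp: nth_append)
  also have "\<dots> = (mat_of_cols n ts *\<^sub>v vec (length ts) (\<lambda>k. c$k)) $ r"
    using moc_index[OF r, of "vec (length ts) (\<lambda>k. c$k)" ts] by simp
  also have "(mat_of_cols n ts *\<^sub>v vec (length ts) (\<lambda>k. c$k)) $ r + v$r * c$(length ts)
     = (mat_of_cols n ts *\<^sub>v vec (length ts) (\<lambda>k. c$k) + c$(length ts) \<cdot>\<^sub>v v) $ r"
    using r v by (simp add: mult.commute[of "v$r"])
  finally show "(mat_of_cols n (ts@[v]) *\<^sub>v c) $ r = (mat_of_cols n ts *\<^sub>v vec (length ts) (\<lambda>k. c$k) + c$(length ts) \<cdot>\<^sub>v v) $ r" .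
qed (use v in simp)

lemma moc_zero: "mat_of_cols n ts *\<^sub>v 0\<^sub>v (length ts) = 0\<^sub>v n"
  by (rule eq_vecI) (simp_all add: moc_index)

lemma indep_Nil: "indep n []"
  unfolding indep_def
proof (intro ballI impI)
  fix c :: "'a vec" assume "c \<in> carrier_vec (length [])"
  then have "dim_vec c = 0" by (simp add: carrier_vecD)
  then show "c = 0\<^sub>v (length [])" by (intro eq_vecI) simp_all
qed

lemma dim_moc_mult[simp]: "dim_vec (mat_of_cols n ts *\<^sub>v c) = n"
  by simp

lemma moc_mult_carrier[simp]: "mat_of_cols n ts *\<^sub>v c \<in> carrier_vec n"
  by (intro carrier_vecI) simp

lemma indep_snoc:
  fixes v :: "'a::field vec"
  assumes v: "v \<in> carrier_vec n"
  shows "indep n (ts@[v]) \<longleftrightarrow> indep n ts \<and> v \<notin> lspan n ts"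
proof -
  let ?l = "length ts"
  let ?M = "mat_of_cols n ts"
  let ?M' = "mat_of_cols n (ts@[v])"
  have dv: "dim_vec v = n" using v by (rule carrier_vecD)
  show ?thesis
  proof safe
    assume I: "indep n (ts@[v])"
    show "indep n ts" unfolding indep_def
    proof (intro ballI impI)
      fix c :: "'a vec" assume c: "c \<in> carrier_vec ?l" and Mc: "?M *\<^sub>v c = 0\<^sub>v n"
      have dc: "dim_vec c = ?l" using c by (rule carrier_vecD)
      define c' where "c' = vec (Suc ?l) (\<lambda>k. if k < ?l then c$k else 0)"
      have c': "c' \<in> carrier_vec (Suc ?l)" unfolding c'_def by (rule vec_carrier)
      have red: "vec ?l (\<lambda>k. c'$k) = c" by (rule eq_vecI) (simp_all add: c'_def dc)
      have "?M' *\<^sub>v c' = ?M *\<^sub>v c + c'$?l \<cdot>\<^sub>v v"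
        using moc_snoc[OF v c'] red by simp
      also have "\<dots> = 0\<^sub>v n" by (rule eq_vecI) (simp_all add: Mc c'_def dv)
      finally have "c' = 0\<^sub>v (Suc ?l)" using I c' unfolding indep_def by simp
      then have c'0: "c' $ i = 0" if "i < Suc ?l" for i using that by simp
      show "c = 0\<^sub>v ?l"
      proof (rule eq_vecI)
        fix i assume "i < dim_vec (0\<^sub>v ?l :: 'a vec)"
        then have i: "i < ?l" by simp
        have "c' $ i = c $ i" using i by (simp add: c'_def)
        then show "c $ i = 0\<^sub>v ?l $ i" using c'0[of i] i by simp
      qed (simp add: dc)
    qed
  next
    assume I: "indep n (ts@[v])" and sp: "v \<in> lspan n ts"
    then obtain c where c: "c \<in> carrier_vec ?l" and vc: "v = ?M *\<^sub>v c" unfolding lspan_def by blast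
    have dc: "dim_vec c = ?l" using c by (rule carrier_vecD)
    define c' where "c' = vec (Suc ?l) (\<lambda>k. if k < ?l then c$k else -1)"
    have c': "c' \<in> carrier_vec (Suc ?l)" unfolding c'_def by (rule vec_carrier)
    have red: "vec ?l (\<lambda>k. c'$k) = c" by (rule eq_vecI) (simp_all add: c'_def dc)
    have "?M' *\<^sub>v c' = ?M *\<^sub>v c + c'$?l \<cdot>\<^sub>v v"
      using moc_snoc[OF v c'] red by simp
    also have "\<dots> = 0\<^sub>v n" by (rule eq_vecI) (simp_all add: c'_def dv flip: vc)
    finally have "c' = 0\<^sub>v (Suc ?l)" using I c' unfolding indep_def by simp
    then have "c' $ ?l = 0" by simp
    then show False by (simp add: c'_def)
  next
    assume I: "indep n ts" and nsp: "v \<notin> lspan n ts"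
    show "indep n (ts@[v])" unfolding indep_def
    proof (intro ballI impI)
      fix c' :: "'a vec" assume c': "c' \<in> carrier_vec (length (ts@[v]))" and Mc': "?M' *\<^sub>v c' = 0\<^sub>v n"
      have c'S: "c' \<in> carrier_vec (Suc ?l)" using c' by simp
      have dc': "dim_vec c' = Suc ?l" using c'S by (rule carrier_vecD)
      define c where "c = vec ?l (\<lambda>k. c'$k)"
      define a where "a = c' $ ?l"
      have c: "c \<in> carrier_vec ?l" unfolding c_def by (rule vec_carrier)
      have eq0: "?M *\<^sub>v c + a \<cdot>\<^sub>v v = 0\<^sub>v n" using moc_snoc[OF v c'S] Mc' by (simp add: c_def a_def)
      have ent: "(?M *\<^sub>v c) $ r = - (a * v $ r)" if r: "r < n" for r
      proof -
        have "(?M *\<^sub>v c + a \<cdot>\<^sub>v v) $ r = 0" using eq0 r by simp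
        then show ?thesis using r dv by (simp add: eq_neg_iff_add_eq_0)
      qed
      have a0: "a = 0"
      proof (rule ccontr)
        assume a: "a \<noteq> 0"
        have "v = ?M *\<^sub>v ((- 1 / a) \<cdot>\<^sub>v c)"
        proof (rule eq_vecI)
          fix r assume "r < dim_vec (?M *\<^sub>v ((- 1 / a) \<cdot>\<^sub>v c))"
          then have r: "r < n" by simp
          have "?M *\<^sub>v ((- 1 / a) \<cdot>\<^sub>v c) = (- 1 / a) \<cdot>\<^sub>v (?M *\<^sub>v c)"
            by (rule mult_mat_vec[OF mat_of_cols_carrier(1) c])
          then show "v $ r = (?M *\<^sub>v ((- 1 / a) \<cdot>\<^sub>v c)) $ r"
            using r ent[OF r] a by simp
        qed (simp add: dv)
        moreover have "(- 1 / a) \<cdot>\<^sub>v c \<in> carrier_vec ?l" using c by simp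
        ultimately have "v \<in> lspan n ts" unfolding lspan_def by blast
        then show False using nsp by simp
      qed
      have "?M *\<^sub>v c = 0\<^sub>v n"
      proof (rule eq_vecI)
        fix r assume "r < dim_vec (0\<^sub>v n :: 'a vec)"
        then have r: "r < n" by simp
        show "(?M *\<^sub>v c) $ r = 0\<^sub>v n $ r" using ent[OF r] a0 r by simp
      qed simp
      then have c0: "c = 0\<^sub>v ?l" using I c unfolding indep_def by blast
      show "c' = 0\<^sub>v (length (ts@[v]))"
      proof (rule eq_vecI)
        fix i assume "i < dim_vec (0\<^sub>v (length (ts@[v])) :: 'a vec)"
        then have i: "i < Suc ?l" by simp
        show "c' $ i = 0\<^sub>v (length (ts@[v])) $ i"
        proof (cases "i < ?l")
          case True
          then have "c' $ i = c $ i" by (simp add: c_def)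
          then show ?thesis using True i c0 by simp
        next
          case False
          then have "i = ?l" using i by simp
          then show ?thesis using a0 by (simp add: a_def)
        qed
      qed (simp add: dc')
    qed
  qed
qed

lemma lspan_carrier: "lspan n ts \<subseteq> carrier_vec n"
  unfolding lspan_def by auto

lemma subspD:
  assumes "subsp n K"
  shows "K \<subseteq> carrier_vec n" "0\<^sub>v n \<in> K" "u \<in> K \<Longrightarrow> v \<in> K \<Longrightarrow> u + v \<in> K" "v \<in> K \<Longrightarrow> a \<cdot>\<^sub>v v \<in> K"
  using assms unfolding subsp_def by blast+

lemma lspan_Nil: "lspan n ([] :: 'a::field vec list) = {0\<^sub>v n}"
proof -
  have "carrier_vec 0 = {0\<^sub>v 0 :: 'a vec}"
  proof
    show "carrier_vec 0 \<subseteq> {0\<^sub>v 0 :: 'a vec}"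
    proof
      fix c :: "'a vec" assume "c \<in> carrier_vec 0"
      then have "dim_vec c = 0" by (rule carrier_vecD)
      then have "c = 0\<^sub>v 0" by (intro eq_vecI) simp_all
      then show "c \<in> {0\<^sub>v 0}" by simp
    qed
  qed simp
  then show ?thesis unfolding lspan_def using moc_zero[of n "[] :: 'a vec list"] by simp
qed

lemma lspan_sub:
  fixes K :: "'a::field vec set" and ts :: "'a vec list"
  assumes K: "subsp n K"
  shows "set ts \<subseteq> K \<Longrightarrow> lspan n ts \<subseteq> K"
proof (induction ts rule: rev_induct)
  case Nil
  show ?case using subspD(2)[OF K] by (simp add: lspan_Nil)
next
  case (snoc v ts)
  have tsK: "set ts \<subseteq> K" and vK: "v \<in> K" using snoc.prems by auto
  have v: "v \<in> carrier_vec n" using vK subspD(1)[OF K] by blast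
  have IH: "lspan n ts \<subseteq> K" using snoc.IH tsK by blast
  show ?case
  proof
    fix x :: "'a vec" assume "x \<in> lspan n (ts@[v])"
    then obtain c :: "'a vec" where c: "c \<in> carrier_vec (length (ts@[v]))" and x: "x = mat_of_cols n (ts@[v]) *\<^sub>v c"
      unfolding lspan_def by blast
    have c': "c \<in> carrier_vec (Suc (length ts))" using c by simp
    have x2: "x = mat_of_cols n ts *\<^sub>v vec (length ts) (\<lambda>k. c$k) + c$(length ts) \<cdot>\<^sub>v v"
      using moc_snoc[OF v c'] x by simp
    have "mat_of_cols n ts *\<^sub>v vec (length ts) (\<lambda>k. c$k) \<in> lspan n ts"
      unfolding lspan_def by (intro imageI vec_carrier)
    then have "mat_of_cols n ts *\<^sub>v vec (length ts) (\<lambda>k. c$k) \<in> K" using IH by blast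
    moreover have "c$(length ts) \<cdot>\<^sub>v v \<in> K" using subspD(4)[OF K vK] .
    ultimately show "x \<in> K" unfolding x2 by (rule subspD(3)[OF K])
  qed
qed

lemma card_lspan:
  fixes ts :: "'a::{finite,field} vec list"
  assumes I: "indep n ts"
  shows "card (lspan n ts) = card (UNIV :: 'a set) ^ length ts"
proof -
  let ?M = "mat_of_cols n ts"
  have "inj_on (\<lambda>c. ?M *\<^sub>v c) (carrier_vec (length ts))"
  proof (rule inj_onI)
    fix c d :: "'a vec" assume c: "c \<in> carrier_vec (length ts)" and d: "d \<in> carrier_vec (length ts)"
      and eq: "?M *\<^sub>v c = ?M *\<^sub>v d"
    have "?M *\<^sub>v (c - d) = ?M *\<^sub>v c - ?M *\<^sub>v d"
      by (rule mult_minus_distrib_mat_vec[OF mat_of_cols_carrier(1) c d])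
    also have "\<dots> = 0\<^sub>v n" unfolding eq by (rule minus_cancel_vec) simp
    finally have "c - d = 0\<^sub>v (length ts)" using I c d unfolding indep_def by simp
    then have e: "(c - d) $ i = 0" if "i < length ts" for i using that by simp
    have dc: "dim_vec c = length ts" "dim_vec d = length ts" using c d by (simp_all add: carrier_vecD)
    show "c = d"
    proof (rule eq_vecI)
      fix i assume "i < dim_vec d"
      then have i: "i < length ts" using dc by simp
      show "c $ i = d $ i" using e[OF i] i dc by simp
    qed (simp add: dc)
  qed
  then show ?thesis unfolding lspan_def by (simp add: card_image card_carrier_vec)
qed

lemma tuples_0: "tuples n 0 K = {[]}"
  unfolding tuples_def by (auto simp: indep_Nil)

lemma tuples_Suc:
  assumes K: "subsp n K"
  shows "tuples n (Suc i) K = (\<lambda>(ts,v). ts@[v]) ` (SIGMA ts:tuples n i K. K - lspan n ts)"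
proof
  show "tuples n (Suc i) K \<subseteq> (\<lambda>(ts,v). ts@[v]) ` (SIGMA ts:tuples n i K. K - lspan n ts)"
  proof
    fix xs assume xs: "xs \<in> tuples n (Suc i) K"
    then have "length xs = Suc i" unfolding tuples_def by simp
    then obtain ts v where xs_eq: "xs = ts@[v]" and l: "length ts = i" by (auto simp: length_Suc_conv_rev)
    have sK: "set ts \<subseteq> K" "v \<in> K" "indep n (ts@[v])" using xs unfolding xs_eq tuples_def by auto
    have v: "v \<in> carrier_vec n" using sK(2) subspD(1)[OF K] by blast
    have "indep n ts" "v \<notin> lspan n ts" using indep_snoc[OF v] sK(3) by auto
    then have "(ts, v) \<in> (SIGMA ts:tuples n i K. K - lspan n ts)" using sK l unfolding tuples_def by simp
    then show "xs \<in> (\<lambda>(ts,v). ts@[v]) ` (SIGMA ts:tuples n i K. K - lspan n ts)"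
      unfolding xs_eq by (rule rev_image_eqI) simp
  qed
next
  show "(\<lambda>(ts,v). ts@[v]) ` (SIGMA ts:tuples n i K. K - lspan n ts) \<subseteq> tuples n (Suc i) K"
  proof
    fix xs assume "xs \<in> (\<lambda>(ts,v). ts@[v]) ` (SIGMA ts:tuples n i K. K - lspan n ts)"
    then obtain ts v where xs_eq: "xs = ts@[v]" and ts: "ts \<in> tuples n i K" and vK: "v \<in> K" and nsp: "v \<notin> lspan n ts"
      by auto
    have v: "v \<in> carrier_vec n" using vK subspD(1)[OF K] by blast
    have "indep n (ts@[v])" using indep_snoc[OF v] ts nsp unfolding tuples_def by simp
    then show "xs \<in> tuples n (Suc i) K" using ts vK unfolding xs_eq tuples_def by simp
  qed
qed

lemma finite_tuples:
  fixes K :: "'a::field vec set"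
  assumes "finite K"
  shows "finite (tuples n i K)"
proof -
  have "tuples n i K \<subseteq> {xs. set xs \<subseteq> K \<and> length xs = i}" unfolding tuples_def by auto
  moreover have "finite {xs. set xs \<subseteq> K \<and> length xs = i}"
    by (rule finite_lists_length_eq) (rule assms)
  ultimately show ?thesis by (rule finite_subset)
qed

lemma card_tuples:
  fixes K :: "'a::{finite,field} vec set"
  assumes K: "subsp n K"
  shows "(of_nat (card (tuples n i K)) :: complex) = (\<Prod>k<i. of_nat (card K) - of_nat (card (UNIV::'a set)) ^ k)"
proof (induction i)
  case 0
  then show ?case by (simp add: tuples_0)
next
  case (Suc i)
  let ?q = "card (UNIV::'a set)"
  have fK: "finite K" by (rule finite_subset[OF subspD(1)[OF K] finite_carrier_vec])
  have inj: "inj_on (\<lambda>(ts,v). ts@[v]) (SIGMA ts:tuples n i K. K - lspan n ts)"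
    by (rule inj_onI) auto
  have "card (tuples n (Suc i) K) = card (SIGMA ts:tuples n i K. K - lspan n ts)"
    unfolding tuples_Suc[OF K] by (rule card_image[OF inj])
  also have "\<dots> = (\<Sum>ts\<in>tuples n i K. card (K - lspan n ts))"
    by (rule card_SigmaI) (use finite_tuples[OF fK] fK in auto)
  finally have c: "card (tuples n (Suc i) K) = (\<Sum>ts\<in>tuples n i K. card (K - lspan n ts))" .
  have each: "(of_nat (card (K - lspan n ts)) :: complex) = of_nat (card K) - of_nat ?q ^ i"
    if ts: "ts \<in> tuples n i K" for ts
  proof -
    have sub: "lspan n ts \<subseteq> K" using lspan_sub[OF K] ts unfolding tuples_def by blast
    have cs: "card (lspan n ts) = ?q ^ i" using card_lspan ts unfolding tuples_def by auto
    have le: "card (lspan n ts) \<le> card K" by (rule card_mono[OF fK sub])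
    have "card (K - lspan n ts) = card K - card (lspan n ts)"
      by (rule card_Diff_subset[OF finite_subset[OF sub fK] sub])
    then show ?thesis using le cs by (simp add: of_nat_diff)
  qed
  have "(of_nat (card (tuples n (Suc i) K)) :: complex) = (\<Sum>ts\<in>tuples n i K. of_nat (card K) - of_nat ?q ^ i)"
    unfolding c of_nat_sum by (rule sum.cong) (simp_all add: each)
  also have "\<dots> = of_nat (card (tuples n i K)) * (of_nat (card K) - of_nat ?q ^ i)" by simp
  finally show ?case using Suc.IH by simp
qed

lemma extend_indep:
  fixes ts :: "'a::{finite,field} vec list"
  shows "indep n ts \<Longrightarrow> set ts \<subseteq> carrier_vec n \<Longrightarrow> length ts \<le> n \<Longrightarrow>
    \<exists>us. set us \<subseteq> carrier_vec n \<and> length (ts@us) = n \<and> indep n (ts@us)"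
proof (induction "n - length ts" arbitrary: ts)
  case 0
  then show ?case by (intro exI[of _ "[]"]) simp
next
  case (Suc m)
  let ?q = "card (UNIV::'a set)"
  have lt: "length ts < n" using Suc.hyps by simp
  have "?q ^ length ts < ?q ^ n" using card_ge2[where 'a='a] lt by (intro power_strict_increasing) auto
  then have lt2: "card (lspan n ts) < card (carrier_vec n :: 'a vec set)"
    using card_lspan[OF Suc.prems(1)] card_carrier_vec[where 'a='a] by simp
  have "\<not> carrier_vec n \<subseteq> lspan n ts"
  proof
    assume "carrier_vec n \<subseteq> lspan n ts"
    then have "card (carrier_vec n :: 'a vec set) \<le> card (lspan n ts)"
      by (rule card_mono[OF finite_subset[OF lspan_carrier finite_carrier_vec]])
    then show False using lt2 by simp
  qed
  then obtain v where v: "v \<in> carrier_vec n" "v \<notin> lspan n ts" by blast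
  have I': "indep n (ts@[v])" using indep_snoc[OF v(1)] Suc.prems v by simp
  have "m = n - length (ts@[v])" using Suc.hyps by simp
  then obtain us where us: "set us \<subseteq> carrier_vec n" "length (ts@[v]@us) = n" "indep n (ts@[v]@us)"
    using Suc.hyps(1)[of "ts@[v]"] I' Suc.prems v lt by auto
  then show ?case by (intro exI[of _ "v#us"]) (simp add: v)
qed

lemma GLn_iff: "A \<in> GLn n \<longleftrightarrow> A \<in> carrier_mat n n \<and> (\<exists>B\<in>carrier_mat n n. A * B = 1\<^sub>m n \<and> B * A = 1\<^sub>m n)"
proof
  assume "A \<in> GLn n"
  then have A: "A \<in> carrier_mat n n" and inv: "invertible_mat A" unfolding GLn_def by auto
  then obtain B where AB: "A * B = 1\<^sub>m (dim_row A)" and BA: "B * A = 1\<^sub>m (dim_row B)"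
    unfolding invertible_mat_def inverts_mat_def by blast
  have "dim_col (B * A) = dim_col (1\<^sub>m (dim_row B) :: 'a mat)" using BA by simp
  then have r: "dim_row B = n" using A by simp
  have "dim_col (A * B) = dim_col (1\<^sub>m (dim_row A) :: 'a mat)" using AB by simp
  then have c: "dim_col B = n" using A by simp
  have B: "B \<in> carrier_mat n n" using r c by (intro carrier_matI) simp_all
  show "A \<in> carrier_mat n n \<and> (\<exists>B\<in>carrier_mat n n. A * B = 1\<^sub>m n \<and> B * A = 1\<^sub>m n)"
    using A B AB BA r by auto
next
  assume "A \<in> carrier_mat n n \<and> (\<exists>B\<in>carrier_mat n n. A * B = 1\<^sub>m n \<and> B * A = 1\<^sub>m n)"
  then obtain B where A: "A \<in> carrier_mat n n" and B: "B \<in> carrier_mat n n" and AB: "A * B = 1\<^sub>m n" and BA: "B * A = 1\<^sub>m n"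
    by blast
  have "invertible_mat A" unfolding invertible_mat_def inverts_mat_def
    using A B AB BA by (intro conjI exI[of _ B]) auto
  then show "A \<in> GLn n" unfolding GLn_def using A by simp
qed

lemma inv_unique:
  fixes A B B' :: "'a::field mat"
  assumes A: "A \<in> carrier_mat n n" and B: "B \<in> carrier_mat n n" and B': "B' \<in> carrier_mat n n"
    and AB: "A * B = 1\<^sub>m n" and BA': "B' * A = 1\<^sub>m n"
  shows "B' = B"
proof -
  have "B' = B' * (A * B)" using B' AB by simp
  also have "\<dots> = (B' * A) * B" using assoc_mult_mat[OF B' A B] by simp
  also have "\<dots> = B" using BA' B by simp
  finally show ?thesis .
qed

lemma ginv:
  fixes A :: "'a::{finite,field} mat"
  assumes "A \<in> GLn n"
  shows "ginv n A \<in> carrier_mat n n" "A * ginv n A = 1\<^sub>m n" "ginv n A * A = 1\<^sub>m n"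
proof -
  obtain B where A: "A \<in> carrier_mat n n" and B: "B \<in> carrier_mat n n" and AB: "A * B = 1\<^sub>m n" and BA: "B * A = 1\<^sub>m n"
    using assms unfolding GLn_iff by blast
  have "ginv n A = B" unfolding ginv_def
  proof (rule the_equality)
    show "B \<in> carrier_mat n n \<and> A * B = 1\<^sub>m n \<and> B * A = 1\<^sub>m n" using B AB BA by simp
    fix B' assume "B' \<in> carrier_mat n n \<and> A * B' = 1\<^sub>m n \<and> B' * A = 1\<^sub>m n"
    then show "B' = B" using inv_unique[OF A B _ AB] by blast
  qed
  then show "ginv n A \<in> carrier_mat n n" "A * ginv n A = 1\<^sub>m n" "ginv n A * A = 1\<^sub>m n"
    using B AB BA by simp_all
qed

lemma GLn_carrier: "A \<in> GLn n \<Longrightarrow> A \<in> carrier_mat n n"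
  unfolding GLn_def by simp

lemma ginv_GLn:
  fixes A :: "'a::{finite,field} mat"
  assumes "A \<in> GLn n" shows "ginv n A \<in> GLn n"
  unfolding GLn_iff using ginv[OF assms] GLn_carrier[OF assms] by blast

lemma ginv_ginv:
  fixes A :: "'a::{finite,field} mat"
  assumes A: "A \<in> GLn n" shows "ginv n (ginv n A) = A"
proof -
  have G: "ginv n A \<in> GLn n" by (rule ginv_GLn[OF A])
  show ?thesis
    using inv_unique[OF ginv(1)[OF A] GLn_carrier[OF A] ginv(1)[OF G] ginv(3)[OF A] ginv(3)[OF G]] .
qed

lemma GLn_mult:
  fixes A B :: "'a::{finite,field} mat"
  assumes A: "A \<in> GLn n" and B: "B \<in> GLn n"
  shows "A * B \<in> GLn n"
proof -
  have Ac: "A \<in> carrier_mat n n" and Bc: "B \<in> carrier_mat n n" using A B by (simp_all add: GLn_carrier)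
  note Ai = ginv[OF A] and Bi = ginv[OF B]
  have BA': "ginv n B * ginv n A \<in> carrier_mat n n" using Bi(1) Ai(1) by (rule mult_carrier_mat)
  have AB: "A * B \<in> carrier_mat n n" using Ac Bc by (rule mult_carrier_mat)
  have "B * (ginv n B * ginv n A) = (B * ginv n B) * ginv n A"
    using assoc_mult_mat[OF Bc Bi(1) Ai(1)] by simp
  also have "\<dots> = ginv n A" using Bi(2) Ai(1) by simp
  finally have x: "B * (ginv n B * ginv n A) = ginv n A" .
  have "(A * B) * (ginv n B * ginv n A) = A * (B * (ginv n B * ginv n A))"
    by (rule assoc_mult_mat[OF Ac Bc BA'])
  also have "\<dots> = 1\<^sub>m n" unfolding x by (rule Ai(2))
  finally have 1: "(A * B) * (ginv n B * ginv n A) = 1\<^sub>m n" .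
  have "ginv n A * (A * B) = (ginv n A * A) * B"
    using assoc_mult_mat[OF Ai(1) Ac Bc] by simp
  also have "\<dots> = B" using Ai(3) Bc by simp
  finally have y: "ginv n A * (A * B) = B" .
  have "(ginv n B * ginv n A) * (A * B) = ginv n B * (ginv n A * (A * B))"
    by (rule assoc_mult_mat[OF Bi(1) Ai(1) AB])
  also have "\<dots> = 1\<^sub>m n" unfolding y by (rule Bi(3))
  finally have 2: "(ginv n B * ginv n A) * (A * B) = 1\<^sub>m n" .
  show ?thesis unfolding GLn_iff using 1 2 Ac Bc Ai(1) Bi(1)
    by (intro conjI bexI[of _ "ginv n B * ginv n A"]) auto
qed

lemma indep_GLn:
  fixes ts :: "'a::{finite,field} vec list"
  assumes l: "length ts = n" and I: "indep n ts"
  shows "mat_of_cols n ts \<in> GLn n"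
proof -
  let ?A = "mat_of_cols n ts"
  have A: "?A \<in> carrier_mat n n" using mat_of_cols_carrier(1)[of n ts] l by simp
  have "det ?A \<noteq> 0"
  proof
    assume "det ?A = 0"
    then obtain v where v: "v \<in> carrier_vec n" "v \<noteq> 0\<^sub>v n" "?A *\<^sub>v v = 0\<^sub>v n"
      unfolding det_0_iff_vec_prod_zero_field[OF A] by blast
    then show False using I l unfolding indep_def by auto
  qed
  from det_non_zero_imp_unit[OF A this, of undefined]
  obtain B where B: "B \<in> carrier_mat n n" "B * ?A = 1\<^sub>m n" "?A * B = 1\<^sub>m n"
    unfolding Units_def ring_mat_def by auto
  show ?thesis unfolding GLn_iff using A B by blast
qed

lemma mult_unit_vec:
  fixes A :: "'a::field mat"
  assumes A: "A \<in> carrier_mat nr n" and k: "k < n"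
  shows "A *\<^sub>v unit_vec n k = col A k"
proof -
  have "col (A * 1\<^sub>m n) k = A *\<^sub>v col (1\<^sub>m n) k" using col_mult2[OF A one_carrier_mat k] .
  moreover have "A * 1\<^sub>m n = A" by (rule right_mult_one_mat[OF A])
  ultimately show ?thesis using k by simp
qed

lemma cols_indep:
  fixes y :: "'a::{finite,field} mat"
  assumes y: "y \<in> GLn n" and j: "j \<le> n"
  shows "indep n (map (col y) [0..<j])"
  unfolding indep_def
proof (intro ballI impI)
  let ?M = "mat_of_cols n (map (col y) [0..<j])"
  fix c :: "'a vec" assume c: "c \<in> carrier_vec (length (map (col y) [0..<j]))" and Mc: "?M *\<^sub>v c = 0\<^sub>v n"
  have cj: "c \<in> carrier_vec j" using c by simp
  have dc: "dim_vec c = j" using cj by (rule carrier_vecD)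
  have yc: "y \<in> carrier_mat n n" using y by (rule GLn_carrier)
  define c' where "c' = vec n (\<lambda>k. if k < j then c$k else 0)"
  have c': "c' \<in> carrier_vec n" unfolding c'_def by (rule vec_carrier)
  have yeq: "y = mat_of_cols n (cols y)" using mat_of_cols_cols[of y] yc by simp
  have "y *\<^sub>v c' = ?M *\<^sub>v c"
  proof (rule eq_vecI)
    fix r assume "r < dim_vec (?M *\<^sub>v c)"
    then have r: "r < n" by simp
    have "(y *\<^sub>v c') $ r = (mat_of_cols n (cols y) *\<^sub>v c') $ r" using yeq by simp
    also have "\<dots> = (\<Sum>k<length (cols y). cols y ! k $ r * c' $ k)"
    proof -
      have c'': "c' \<in> carrier_vec (length (cols y))" using c' yc by simp
      show ?thesis by (rule moc_index[OF r c''])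
    qed
    also have "\<dots> = (\<Sum>k<n. if k < j then col y k $ r * c $ k else 0)"
      using yc by (intro sum.cong) (auto simp: c'_def)
    also have "\<dots> = (\<Sum>k\<in>{k\<in>{..<n}. k < j}. col y k $ r * c $ k)"
      by (rule sum.inter_filter[symmetric]) simp
    also have "{k\<in>{..<n}. k < j} = {..<j}" using j by auto
    also have "(\<Sum>k<j. col y k $ r * c $ k) = (\<Sum>k<length (map (col y) [0..<j]). (map (col y) [0..<j]) ! k $ r * c $ k)"
      by (intro sum.cong) auto
    also have "\<dots> = (?M *\<^sub>v c) $ r" using moc_index[OF r c] by simp
    finally show "(y *\<^sub>v c') $ r = (?M *\<^sub>v c) $ r" .
  qed (use yc in simp)
  then have yc0: "y *\<^sub>v c' = 0\<^sub>v n" using Mc by simp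
  have "c' = (ginv n y * y) *\<^sub>v c'" using ginv(3)[OF y] c' by simp
  also have "\<dots> = ginv n y *\<^sub>v (y *\<^sub>v c')" using assoc_mult_mat_vec[OF ginv(1)[OF y] yc c'] .
  also have "\<dots> = 0\<^sub>v n" unfolding yc0 using ginv(1)[OF y] by (intro eq_vecI) auto
  finally have c'0: "c' = 0\<^sub>v n" .
  show "c = 0\<^sub>v (length (map (col y) [0..<j]))"
  proof (rule eq_vecI)
    fix i assume "i < dim_vec (0\<^sub>v (length (map (col y) [0..<j])) :: 'a vec)"
    then have i: "i < j" by simp
    have "c' $ i = c $ i" using i j by (simp add: c'_def)
    then show "c $ i = 0\<^sub>v (length (map (col y) [0..<j])) $ i" using c'0 i j by simp
  qed (simp add: dc)
qed

definition Ugrp :: "nat \<Rightarrow> nat \<Rightarrow> 'a::{finite,field} mat set" where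
  "Ugrp n j = {u \<in> GLn n. \<forall>k<j. col u k = unit_vec n k}"

definition Fset :: "nat \<Rightarrow> nat \<Rightarrow> 'a::{finite,field} vec set \<Rightarrow> 'a mat set" where
  "Fset n j K = {y \<in> GLn n. \<forall>k<j. col y k \<in> K}"

lemma finite_GLn: "finite (GLn n :: 'a::{finite,field} mat set)"
  by (rule finite_subset[OF _ finite_carrier_mat[of n n]]) (auto simp: GLn_def)

lemma fiber_card:
  fixes y0 :: "'a::{finite,field} mat"
  assumes y0: "y0 \<in> Fset n j K" and j: "j \<le> n"
  shows "card {y \<in> Fset n j K. map (col y) [0..<j] = map (col y0) [0..<j]} = card (Ugrp n j :: 'a mat set)"
proof -
  have y0G: "y0 \<in> GLn n" using y0 unfolding Fset_def by simp
  have y0c: "y0 \<in> carrier_mat n n" using y0G by (rule GLn_carrier)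
  note yi = ginv[OF y0G]
  have inj: "inj_on (\<lambda>u. y0 * u) (Ugrp n j)"
  proof (rule inj_onI)
    fix u u' assume u: "u \<in> Ugrp n j" and u': "u' \<in> Ugrp n j" and eq: "y0 * u = y0 * u'"
    have uc: "u \<in> carrier_mat n n" "u' \<in> carrier_mat n n" using u u' unfolding Ugrp_def by (auto simp: GLn_carrier)
    have "u = (ginv n y0 * y0) * u" using yi(3) uc(1) by simp
    also have "\<dots> = ginv n y0 * (y0 * u)" by (rule assoc_mult_mat[OF yi(1) y0c uc(1)])
    also have "\<dots> = ginv n y0 * (y0 * u')" by (simp add: eq)
    also have "\<dots> = (ginv n y0 * y0) * u'" by (rule assoc_mult_mat[OF yi(1) y0c uc(2), symmetric])
    also have "\<dots> = u'" using yi(3) uc(2) by simp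
    finally show "u = u'" .
  qed
  have img: "(\<lambda>u. y0 * u) ` Ugrp n j = {y \<in> Fset n j K. map (col y) [0..<j] = map (col y0) [0..<j]}"
  proof
    show "(\<lambda>u. y0 * u) ` Ugrp n j \<subseteq> {y \<in> Fset n j K. map (col y) [0..<j] = map (col y0) [0..<j]}"
    proof
      fix y assume "y \<in> (\<lambda>u. y0 * u) ` Ugrp n j"
      then obtain u where u: "u \<in> Ugrp n j" and y: "y = y0 * u" by blast
      have uG: "u \<in> GLn n" and ucol: "\<forall>k<j. col u k = unit_vec n k" using u unfolding Ugrp_def by auto
      have uc: "u \<in> carrier_mat n n" using uG by (rule GLn_carrier)
      have cols: "col y k = col y0 k" if k: "k < j" for k
      proof -
        have kn: "k < n" using k j by simp
        have "col y k = y0 *\<^sub>v col u k" unfolding y by (rule col_mult2[OF y0c uc kn])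
        also have "\<dots> = y0 *\<^sub>v unit_vec n k" using ucol k by simp
        also have "\<dots> = col y0 k" by (rule mult_unit_vec[OF y0c kn])
        finally show ?thesis .
      qed
      have "y \<in> GLn n" unfolding y by (rule GLn_mult[OF y0G uG])
      moreover have "\<forall>k<j. col y k \<in> K" using cols y0 unfolding Fset_def by simp
      moreover have "map (col y) [0..<j] = map (col y0) [0..<j]" using cols by simp
      ultimately show "y \<in> {y \<in> Fset n j K. map (col y) [0..<j] = map (col y0) [0..<j]}"
        unfolding Fset_def by simp
    qed
  next
    show "{y \<in> Fset n j K. map (col y) [0..<j] = map (col y0) [0..<j]} \<subseteq> (\<lambda>u. y0 * u) ` Ugrp n j"
    proof
      fix y assume "y \<in> {y \<in> Fset n j K. map (col y) [0..<j] = map (col y0) [0..<j]}"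
      then have yG: "y \<in> GLn n" and meq: "map (col y) [0..<j] = map (col y0) [0..<j]"
        unfolding Fset_def by auto
      have yc: "y \<in> carrier_mat n n" using yG by (rule GLn_carrier)
      have cols: "col y k = col y0 k" if "k < j" for k
        using meq that by (simp add: map_eq_conv)
      define u where "u = ginv n y0 * y"
      have uG: "u \<in> GLn n" unfolding u_def by (rule GLn_mult[OF ginv_GLn[OF y0G] yG])
      have "y0 * u = (y0 * ginv n y0) * y" unfolding u_def by (rule assoc_mult_mat[OF y0c yi(1) yc, symmetric])
      also have "\<dots> = y" using yi(2) yc by simp
      finally have yu: "y = y0 * u" by simp
      have "col u k = unit_vec n k" if k: "k < j" for k
      proof -
        have kn: "k < n" using k j by simp
        have "col u k = ginv n y0 *\<^sub>v col y k" unfolding u_def by (rule col_mult2[OF yi(1) yc kn])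
        also have "\<dots> = ginv n y0 *\<^sub>v col y0 k" using cols k by simp
        also have "\<dots> = col (ginv n y0 * y0) k" by (rule col_mult2[OF yi(1) y0c kn, symmetric])
        also have "\<dots> = unit_vec n k" using yi(3) kn by simp
        finally show ?thesis .
      qed
      then have "u \<in> Ugrp n j" using uG unfolding Ugrp_def by simp
      then show "y \<in> (\<lambda>u. y0 * u) ` Ugrp n j" using yu by blast
    qed
  qed
  show ?thesis using card_image[OF inj] img by simp
qed

lemma card_Fset:
  fixes K :: "'a::{finite,field} vec set"
  assumes K: "subsp n K" and j: "j \<le> n"
  shows "card (Fset n j K) = card (tuples n j K) * card (Ugrp n j :: 'a mat set)"
proof -
  let ?phi = "\<lambda>y. map (col y) [0..<j]"
  have fK: "finite K" by (rule finite_subset[OF subspD(1)[OF K] finite_carrier_vec])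
  have c1: "?phi y \<in> tuples n j K" if y: "y \<in> Fset n j K" for y
  proof -
    have "y \<in> GLn n" "\<forall>k<j. col y k \<in> K" using y unfolding Fset_def by auto
    then show ?thesis using cols_indep[of y n j] j unfolding tuples_def by auto
  qed
  have c2: "\<exists>y\<in>Fset n j K. ?phi y = ts" if ts: "ts \<in> tuples n j K" for ts
  proof -
    have tsI: "indep n ts" and tsl: "length ts = j" and tsK: "set ts \<subseteq> K" using ts unfolding tuples_def by auto
    have tsC: "set ts \<subseteq> carrier_vec n" using tsK subspD(1)[OF K] by blast
    obtain us where us: "set us \<subseteq> carrier_vec n" "length (ts@us) = n" "indep n (ts@us)"
      using extend_indep[OF tsI tsC] tsl j by auto
    define y where "y = mat_of_cols n (ts@us)"
    have yG: "y \<in> GLn n" unfolding y_def by (rule indep_GLn[OF us(2) us(3)])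
    have colk: "col y k = ts ! k" if k: "k < j" for k
    proof -
      have e: "(ts@us) ! k = ts ! k" using k tsl by (simp add: nth_append)
      have "ts ! k \<in> set ts" using k tsl by simp
      then have m: "(ts@us) ! k \<in> carrier_vec n" using tsC e by auto
      have kl: "k < length (ts@us)" using k tsl us(2) j by simp
      show ?thesis unfolding y_def using col_mat_of_cols[OF kl m] e by simp
    qed
    have "\<forall>k<j. col y k \<in> K"
    proof (intro allI impI)
      fix k assume k: "k < j"
      have "ts ! k \<in> set ts" using k tsl by simp
      then show "col y k \<in> K" using colk[OF k] tsK by auto
    qed
    then have "y \<in> Fset n j K" using yG unfolding Fset_def by simp
    moreover have "?phi y = ts" by (rule nth_equalityI) (simp_all add: colk tsl)
    ultimately show ?thesis by blast
  qed
  have fin: "finite (Fset n j K)"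
    by (rule finite_subset[OF _ finite_GLn[of n]]) (auto simp: Fset_def)
  have part: "(\<Union>ts\<in>tuples n j K. {y \<in> Fset n j K. ?phi y = ts}) = Fset n j K" using c1 by blast
  have "card (\<Union>ts\<in>tuples n j K. {y \<in> Fset n j K. ?phi y = ts}) = (\<Sum>ts\<in>tuples n j K. card {y \<in> Fset n j K. ?phi y = ts})"
    by (rule card_UN_disjoint) (auto simp: finite_tuples[OF fK] intro: finite_subset[OF _ fin])
  also have "\<dots> = (\<Sum>ts\<in>tuples n j K. card (Ugrp n j :: 'a mat set))"
  proof (rule sum.cong[OF refl])
    fix ts assume "ts \<in> tuples n j K"
    then obtain y0 where y0: "y0 \<in> Fset n j K" and ph: "?phi y0 = ts" using c2 by blast
    show "card {y \<in> Fset n j K. ?phi y = ts} = card (Ugrp n j :: 'a mat set)"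
      using fiber_card[OF y0 j] ph by simp
  qed
  finally show ?thesis unfolding part by simp
qed

lemma subsp_ker:
  fixes g :: "'a::field mat"
  assumes g: "g \<in> carrier_mat n n"
  shows "subsp n {v \<in> carrier_vec n. g *\<^sub>v v = v}"
  unfolding subsp_def
proof (intro conjI ballI allI)
  show "{v \<in> carrier_vec n. g *\<^sub>v v = v} \<subseteq> carrier_vec n" by blast
  have "g *\<^sub>v 0\<^sub>v n = 0\<^sub>v n"
  proof (rule eq_vecI)
    fix i assume "i < dim_vec (0\<^sub>v n :: 'a vec)"
    then have i: "i < n" by simp
    have r: "row g i \<in> carrier_vec n" using g i by simp
    show "(g *\<^sub>v 0\<^sub>v n) $ i = 0\<^sub>v n $ i" using i g scalar_prod_right_zero[OF r] by simp
  qed (use g in simp)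
  then show "0\<^sub>v n \<in> {v \<in> carrier_vec n. g *\<^sub>v v = v}" by simp
next
  fix u v assume u: "u \<in> {v \<in> carrier_vec n. g *\<^sub>v v = v}" and v: "v \<in> {v \<in> carrier_vec n. g *\<^sub>v v = v}"
  then have uc: "u \<in> carrier_vec n" "g *\<^sub>v u = u" and vc: "v \<in> carrier_vec n" "g *\<^sub>v v = v" by auto
  have "g *\<^sub>v (u + v) = g *\<^sub>v u + g *\<^sub>v v" by (rule mult_add_distrib_mat_vec[OF g uc(1) vc(1)])
  then show "u + v \<in> {v \<in> carrier_vec n. g *\<^sub>v v = v}" using uc vc by simp
next
  fix a v assume v: "v \<in> {v \<in> carrier_vec n. g *\<^sub>v v = v}"
  then have vc: "v \<in> carrier_vec n" "g *\<^sub>v v = v" by auto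
  have "g *\<^sub>v (a \<cdot>\<^sub>v v) = a \<cdot>\<^sub>v (g *\<^sub>v v)" by (rule mult_mat_vec[OF g vc(1)])
  then show "a \<cdot>\<^sub>v v \<in> {v \<in> carrier_vec n. g *\<^sub>v v = v}" using vc by simp
qed

definition Wsp :: "nat \<Rightarrow> nat \<Rightarrow> 'a::field vec set" where
  "Wsp n j = {v \<in> carrier_vec n. \<forall>r. j \<le> r \<and> r < n \<longrightarrow> v $ r = 0}"

lemma subsp_W: "subsp n (Wsp n j :: 'a::field vec set)"
  unfolding subsp_def Wsp_def
proof (intro conjI ballI allI)
  fix u v :: "'a vec" assume u: "u \<in> {v \<in> carrier_vec n. \<forall>r. j \<le> r \<and> r < n \<longrightarrow> v $ r = 0}"
    and v: "v \<in> {v \<in> carrier_vec n. \<forall>r. j \<le> r \<and> r < n \<longrightarrow> v $ r = 0}"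
  then have uc: "u \<in> carrier_vec n" "\<forall>r. j \<le> r \<and> r < n \<longrightarrow> u $ r = 0"
    and vc: "v \<in> carrier_vec n" "\<forall>r. j \<le> r \<and> r < n \<longrightarrow> v $ r = 0" by auto
  have dv: "dim_vec v = n" using vc(1) by (rule carrier_vecD)
  show "u + v \<in> {v \<in> carrier_vec n. \<forall>r. j \<le> r \<and> r < n \<longrightarrow> v $ r = 0}"
    using uc vc dv by simp
next
  fix a and v :: "'a vec" assume v: "v \<in> {v \<in> carrier_vec n. \<forall>r. j \<le> r \<and> r < n \<longrightarrow> v $ r = 0}"
  then have vc: "v \<in> carrier_vec n" "\<forall>r. j \<le> r \<and> r < n \<longrightarrow> v $ r = 0" by auto
  have dv: "dim_vec v = n" using vc(1) by (rule carrier_vecD)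
  show "a \<cdot>\<^sub>v v \<in> {v \<in> carrier_vec n. \<forall>r. j \<le> r \<and> r < n \<longrightarrow> v $ r = 0}"
    using vc dv by simp
qed auto

lemma card_W:
  assumes j: "j \<le> n"
  shows "card (Wsp n j :: 'a::{finite,field} vec set) = card (UNIV :: 'a set) ^ j"
proof -
  have b: "bij_betw (\<lambda>v. vec j (\<lambda>r. v $ r)) (Wsp n j :: 'a vec set) (carrier_vec j)"
  proof (rule bij_betw_byWitness[where f'="\<lambda>w. vec n (\<lambda>r. if r < j then w $ r else 0)"])
    show "\<forall>v\<in>Wsp n j. vec n (\<lambda>r. if r < j then vec j (($) v) $ r else 0) = (v :: 'a vec)"
    proof
      fix v :: "'a vec" assume "v \<in> Wsp n j"
      then have vc: "dim_vec v = n" and z: "\<forall>r. j \<le> r \<and> r < n \<longrightarrow> v $ r = 0"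
        unfolding Wsp_def by (auto simp: carrier_vecD)
      show "vec n (\<lambda>r. if r < j then vec j (($) v) $ r else 0) = v"
        by (rule eq_vecI) (use vc z in auto)
    qed
    show "\<forall>w\<in>carrier_vec j. vec j (($) (vec n (\<lambda>r. if r < j then w $ r else 0))) = (w :: 'a vec)"
    proof
      fix w :: "'a vec" assume "w \<in> carrier_vec j"
      then have wc: "dim_vec w = j" by (rule carrier_vecD)
      show "vec j (($) (vec n (\<lambda>r. if r < j then w $ r else 0))) = w"
        by (rule eq_vecI) (use wc j in auto)
    qed
    show "(\<lambda>v. vec j (($) v)) ` Wsp n j \<subseteq> (carrier_vec j :: 'a vec set)"
      by (rule image_subsetI) (rule vec_carrier)
    show "(\<lambda>w. vec n (\<lambda>r. if r < j then w $ r else 0)) ` carrier_vec j \<subseteq> (Wsp n j :: 'a vec set)"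
      unfolding Wsp_def by (rule image_subsetI) (simp add: vec_carrier)
  qed
  show ?thesis using bij_betw_same_card[OF b] card_carrier_vec[where 'a='a] by simp
qed

lemma parabolic_Fset:
  assumes j: "j \<le> n"
  shows "parabolic n j = Fset n j (Wsp n j :: 'a::{finite,field} vec set)"
proof -
  have "(\<forall>i k. j \<le> i \<and> i < n \<and> k < j \<longrightarrow> A $$ (i, k) = 0) \<longleftrightarrow> (\<forall>k<j. col A k \<in> Wsp n j)"
    if A: "A \<in> GLn n" for A :: "'a mat"
  proof -
    have Ac: "A \<in> carrier_mat n n" using A by (rule GLn_carrier)
    have cc: "col A k \<in> carrier_vec n" if "k < j" for k
      by (rule col_carrier_vec[OF _ Ac]) (use that j in simp)
    have ci: "col A k $ i = A $$ (i, k)" if "k < j" "i < n" for i k using Ac that j by simp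
    show ?thesis
    proof
      assume a: "\<forall>i k. j \<le> i \<and> i < n \<and> k < j \<longrightarrow> A $$ (i, k) = 0"
      show "\<forall>k<j. col A k \<in> Wsp n j"
      proof (intro allI impI)
        fix k assume k: "k < j"
        have "\<forall>r. j \<le> r \<and> r < n \<longrightarrow> col A k $ r = 0"
        proof (intro allI impI)
          fix r assume "j \<le> r \<and> r < n"
          then show "col A k $ r = 0" using ci[OF k] a k by simp
        qed
        then show "col A k \<in> Wsp n j" unfolding Wsp_def using cc[OF k] by simp
      qed
    next
      assume a: "\<forall>k<j. col A k \<in> Wsp n j"
      show "\<forall>i k. j \<le> i \<and> i < n \<and> k < j \<longrightarrow> A $$ (i, k) = 0"
      proof (intro allI impI)
        fix i k assume ik: "j \<le> i \<and> i < n \<and> k < j"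
        then have "col A k \<in> Wsp n j" using a by simp
        then have "col A k $ i = 0" unfolding Wsp_def using ik by simp
        then show "A $$ (i, k) = 0" using ci[of k i] ik by simp
      qed
    qed
  qed
  then show ?thesis unfolding parabolic_def Fset_def by blast
qed

lemma GLn_Fset: "GLn j = Fset j j (carrier_vec j :: 'a::{finite,field} vec set)"
  unfolding Fset_def by (auto dest: GLn_carrier)

lemma Ugrp_jj: "Ugrp j j = {1\<^sub>m j :: 'a::{finite,field} mat}"
proof
  show "Ugrp j j \<subseteq> {1\<^sub>m j :: 'a mat}"
  proof
    fix u :: "'a mat" assume "u \<in> Ugrp j j"
    then have uG: "u \<in> GLn j" and uc: "\<forall>k<j. col u k = unit_vec j k" unfolding Ugrp_def by auto
    have Uc: "u \<in> carrier_mat j j" using uG by (rule GLn_carrier)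
    have "u = 1\<^sub>m j"
    proof (rule eq_matI)
      fix r k assume r: "r < dim_row (1\<^sub>m j :: 'a mat)" and k: "k < dim_col (1\<^sub>m j :: 'a mat)"
      have "u $$ (r, k) = col u k $ r" using Uc r k by simp
      also have "\<dots> = unit_vec j k $ r" using uc k by simp
      finally show "u $$ (r, k) = 1\<^sub>m j $$ (r, k)" using r k by simp
    qed (use Uc in auto)
    then show "u \<in> {1\<^sub>m j}" by simp
  qed
next
  have "1\<^sub>m j \<in> GLn j" unfolding GLn_iff by (intro conjI bexI[of _ "1\<^sub>m j"]) simp_all
  then show "{1\<^sub>m j :: 'a mat} \<subseteq> Ugrp j j" unfolding Ugrp_def by simp
qed

lemma P_TL:
  fixes h :: "'a::{finite,field} mat"
  assumes h: "h \<in> GLn n" and j: "j \<le> n"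
  shows "(h \<in> parabolic n j \<and> blockTL j h = 1\<^sub>m j) \<longleftrightarrow> (\<forall>k<j. col h k = unit_vec n k)"
proof -
  have hc: "h \<in> carrier_mat n n" using h by (rule GLn_carrier)
  have TLe: "blockTL j h $$ (r, k) = h $$ (r, k)" if "r < j" "k < j" for r k
    using that unfolding blockTL_def by simp
  show ?thesis
  proof
    assume a: "h \<in> parabolic n j \<and> blockTL j h = 1\<^sub>m j"
    show "\<forall>k<j. col h k = unit_vec n k"
    proof (intro allI impI)
      fix k assume k: "k < j"
      show "col h k = unit_vec n k"
      proof (rule eq_vecI)
        fix r assume "r < dim_vec (unit_vec n k :: 'a vec)"
        then have r: "r < n" by simp
        have ch: "col h k $ r = h $$ (r, k)" using hc r k j by simp
        show "col h k $ r = unit_vec n k $ r"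
        proof (cases "r < j")
          case True
          have "h $$ (r, k) = blockTL j h $$ (r, k)" using TLe True k by simp
          also have "\<dots> = 1\<^sub>m j $$ (r, k)" using a by simp
          finally show ?thesis using ch True k r j by simp
        next
          case False
          have "h $$ (r, k) = 0" using a False r k unfolding parabolic_def by auto
          then show ?thesis using ch False k r j by simp
        qed
      qed (use hc in simp)
    qed
  next
    assume a: "\<forall>k<j. col h k = unit_vec n k"
    have ent: "h $$ (r, k) = (if r = k then 1 else 0)" if "r < n" "k < j" for r k
    proof -
      have "h $$ (r, k) = col h k $ r" using hc that j by simp
      then show ?thesis using a that j by simp
    qed
    have "h \<in> parabolic n j" unfolding parabolic_def using h ent by auto
    moreover have "blockTL j h = 1\<^sub>m j"
    proof (rule eq_matI)
      fix r k assume r: "r < dim_row (1\<^sub>m j :: 'a mat)" and k: "k < dim_col (1\<^sub>m j :: 'a mat)"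
      show "blockTL j h $$ (r, k) = 1\<^sub>m j $$ (r, k)" using TLe[of r k] ent[of r k] r k j by simp
    qed (simp_all add: blockTL_def)
    ultimately show "h \<in> parabolic n j \<and> blockTL j h = 1\<^sub>m j" by simp
  qed
qed

lemma conj_iff:
  fixes x g :: "'a::{finite,field} mat"
  assumes x: "x \<in> GLn n" and g: "g \<in> GLn n" and j: "j \<le> n"
  shows "(\<forall>k<j. col (x * g * ginv n x) k = unit_vec n k) \<longleftrightarrow> (\<forall>k<j. g *\<^sub>v col (ginv n x) k = col (ginv n x) k)"
proof -
  have xc: "x \<in> carrier_mat n n" using x by (rule GLn_carrier)
  have gc: "g \<in> carrier_mat n n" using g by (rule GLn_carrier)
  note xi = ginv[OF x]
  have key: "col (x * g * ginv n x) k = unit_vec n k \<longleftrightarrow> g *\<^sub>v col (ginv n x) k = col (ginv n x) k"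
    if k: "k < n" for k
  proof -
    let ?w = "g *\<^sub>v col (ginv n x) k"
    have cx: "col (ginv n x) k \<in> carrier_vec n" using xi(1) k by simp
    have wc: "?w \<in> carrier_vec n" using gc cx by simp
    have xgc: "x * g \<in> carrier_mat n n" using xc gc by simp
    have "col (x * g * ginv n x) k = (x * g) *\<^sub>v col (ginv n x) k" by (rule col_mult2[OF xgc xi(1) k])
    also have "\<dots> = x *\<^sub>v ?w" by (rule assoc_mult_mat_vec[OF xc gc cx])
    finally have c: "col (x * g * ginv n x) k = x *\<^sub>v ?w" .
    have e: "ginv n x *\<^sub>v unit_vec n k = col (ginv n x) k" by (rule mult_unit_vec[OF xi(1) k])
    show ?thesis
    proof
      assume "col (x * g * ginv n x) k = unit_vec n k"
      then have xw: "x *\<^sub>v ?w = unit_vec n k" using c by simp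
      have "?w = (ginv n x * x) *\<^sub>v ?w" using xi(3) wc by simp
      also have "\<dots> = ginv n x *\<^sub>v (x *\<^sub>v ?w)" by (rule assoc_mult_mat_vec[OF xi(1) xc wc])
      also have "\<dots> = col (ginv n x) k" using xw e by simp
      finally show "?w = col (ginv n x) k" .
    next
      assume "?w = col (ginv n x) k"
      then have "col (x * g * ginv n x) k = x *\<^sub>v col (ginv n x) k" using c by simp
      also have "\<dots> = col (x * ginv n x) k" by (rule col_mult2[OF xc xi(1) k, symmetric])
      also have "\<dots> = unit_vec n k" using xi(2) k by simp
      finally show "col (x * g * ginv n x) k = unit_vec n k" .
    qed
  qed
  show ?thesis using key j by auto
qed

lemma subsp_carrier: "subsp n (carrier_vec n :: 'a::field vec set)"
  unfolding subsp_def by auto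

lemma one_Ugrp:
  assumes j: "j \<le> n"
  shows "1\<^sub>m n \<in> (Ugrp n j :: 'a::{finite,field} mat set)"
proof -
  have "1\<^sub>m n \<in> (GLn n :: 'a mat set)" unfolding GLn_iff by (intro conjI bexI[of _ "1\<^sub>m n"]) simp_all
  then show ?thesis unfolding Ugrp_def using j by simp
qed

theorem proposition3p3:
  fixes n j :: nat and g :: "'a::{finite,field} mat"
  assumes "1 \<le> j" and "j \<le> n - 1" and "g \<in> GLn n"
  shows "HC_ind n j (tensor_char (reg_GL j) triv_char) g
         = (\<Prod>i<j. tau n g - of_nat (card (UNIV :: 'a set)) ^ i)"
proof -
  have j1: "j \<le> n" using assms(1,2) by simp
  have gG: "g \<in> GLn n" by (rule assms(3))
  have gc: "g \<in> carrier_mat n n" using gG by (rule GLn_carrier)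
  let ?q = "card (UNIV :: 'a set)"
  define Kg where "Kg = {v \<in> carrier_vec n. g *\<^sub>v v = v}"
  define S where "S = Fset n j Kg"
  define c where "c = (of_nat (card (GLn j :: 'a mat set)) :: complex)"
  have sK: "subsp n Kg" unfolding Kg_def by (rule subsp_ker[OF gc])
  have summ: "(let h = x * g * ginv n x in if h \<in> parabolic n j then inflate n j (tensor_char (reg_GL j) triv_char) h else 0)
      = (if ginv n x \<in> S then c else 0)" if x: "x \<in> GLn n" for x
  proof -
    define h where "h = x * g * ginv n x"
    have hG: "h \<in> GLn n" unfolding h_def by (intro GLn_mult[OF GLn_mult[OF x gG] ginv_GLn[OF x]])
    have xiG: "ginv n x \<in> GLn n" by (rule ginv_GLn[OF x])
    have xic: "ginv n x \<in> carrier_mat n n" by (rule ginv(1)[OF x])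
    have colK: "col (ginv n x) k \<in> Kg \<longleftrightarrow> g *\<^sub>v col (ginv n x) k = col (ginv n x) k" if k: "k < j" for k
    proof -
      have "col (ginv n x) k \<in> carrier_vec n" by (rule col_carrier_vec[OF _ xic]) (use k j1 in simp)
      then show ?thesis unfolding Kg_def by simp
    qed
    have "(h \<in> parabolic n j \<and> blockTL j h = 1\<^sub>m j) \<longleftrightarrow> (\<forall>k<j. col h k = unit_vec n k)"
      by (rule P_TL[OF hG j1])
    also have "\<dots> \<longleftrightarrow> (\<forall>k<j. g *\<^sub>v col (ginv n x) k = col (ginv n x) k)"
      unfolding h_def by (rule conj_iff[OF x gG j1])
    also have "\<dots> \<longleftrightarrow> ginv n x \<in> S"
      unfolding S_def Fset_def using xiG colK by auto
    finally have eq: "(h \<in> parabolic n j \<and> blockTL j h = 1\<^sub>m j) \<longleftrightarrow> ginv n x \<in> S" .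
    show ?thesis
      unfolding h_def[symmetric] Let_def inflate_def tensor_char_def triv_char_def reg_GL_def c_def
      using eq by auto
  qed
  have SG: "S \<subseteq> GLn n" unfolding S_def Fset_def by auto
  have cardS: "card {x \<in> GLn n. ginv n x \<in> S} = card S"
  proof -
    have "bij_betw (ginv n) {x \<in> GLn n. ginv n x \<in> S} S"
    proof (rule bij_betw_byWitness[where f'="ginv n"])
      show "\<forall>a\<in>{x \<in> GLn n. ginv n x \<in> S}. ginv n (ginv n a) = a" by (auto simp: ginv_ginv)
      show "\<forall>a'\<in>S. ginv n (ginv n a') = a'" using SG by (auto simp: ginv_ginv)
      show "ginv n ` {x \<in> GLn n. ginv n x \<in> S} \<subseteq> S" by auto
      show "ginv n ` S \<subseteq> {x \<in> GLn n. ginv n x \<in> S}" using SG by (auto simp: ginv_ginv ginv_GLn)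
    qed
    then show ?thesis by (rule bij_betw_same_card)
  qed
  have sumS: "(\<Sum>x\<in>GLn n. if ginv n x \<in> S then c else 0) = of_nat (card S) * c"
  proof -
    have "(\<Sum>x\<in>GLn n. if ginv n x \<in> S then c else 0) = (\<Sum>x\<in>{x \<in> GLn n. ginv n x \<in> S}. c)"
      by (rule sum.inter_filter[symmetric]) (rule finite_GLn)
    also have "\<dots> = of_nat (card S) * c" using cardS by simp
    finally show ?thesis .
  qed
  have HC: "HC_ind n j (tensor_char (reg_GL j) triv_char) g
      = (1 / of_nat (card (parabolic n j :: 'a mat set))) * (of_nat (card S) * c)"
  proof -
    have "HC_ind n j (tensor_char (reg_GL j) triv_char) g
       = (1 / of_nat (card (parabolic n j :: 'a mat set))) *
         (\<Sum>x\<in>GLn n. (let h = x * g * ginv n x in if h \<in> parabolic n j then inflate n j (tensor_char (reg_GL j) triv_char) h else 0))"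
      unfolding HC_ind_def induce_def by simp
    also have "(\<Sum>x\<in>GLn n. (let h = x * g * ginv n x in if h \<in> parabolic n j then inflate n j (tensor_char (reg_GL j) triv_char) h else 0))
       = (\<Sum>x\<in>GLn n. if ginv n x \<in> S then c else 0)"
      by (rule sum.cong[OF refl]) (rule summ)
    finally show ?thesis unfolding sumS .
  qed
  define U where "U = card (Ugrp n j :: 'a mat set)"
  have U0: "U \<noteq> 0"
  proof -
    have "finite (Ugrp n j :: 'a mat set)"
      by (rule finite_subset[OF _ finite_GLn[of n]]) (auto simp: Ugrp_def)
    then show ?thesis unfolding U_def using one_Ugrp[OF j1] by (auto simp: card_eq_0_iff)
  qed
  have cS: "card S = card (tuples n j Kg) * U" unfolding S_def U_def by (rule card_Fset[OF sK j1])
  have cP: "card (parabolic n j :: 'a mat set) = card (tuples n j (Wsp n j :: 'a vec set)) * U"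
    unfolding parabolic_Fset[OF j1] U_def by (rule card_Fset[OF subsp_W j1])
  have cG: "card (GLn j :: 'a mat set) = card (tuples j j (carrier_vec j :: 'a vec set))"
    using card_Fset[OF subsp_carrier[of j] le_refl, where 'a='a] unfolding GLn_Fset[symmetric] Ugrp_jj by simp
  have tK: "tau n g = of_nat (card Kg)" unfolding tau_def Kg_def ..
  have TK: "(of_nat (card (tuples n j Kg)) :: complex) = (\<Prod>i<j. tau n g - of_nat ?q ^ i)"
    unfolding tK by (rule card_tuples[OF sK])
  define D :: complex where "D = (\<Prod>i<j. of_nat (card (UNIV :: 'a set)) ^ j - of_nat (card (UNIV :: 'a set)) ^ i)"
  have TW: "(of_nat (card (tuples n j (Wsp n j :: 'a vec set))) :: complex) = D"
    unfolding card_tuples[OF subsp_W] card_W[OF j1] D_def by simp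
  have TJ: "(of_nat (card (tuples j j (carrier_vec j :: 'a vec set))) :: complex) = D"
    unfolding card_tuples[OF subsp_carrier] card_carrier_vec D_def by simp
  have D0: "D \<noteq> 0"
  proof -
    have "(of_nat ?q ^ j - of_nat ?q ^ i :: complex) \<noteq> 0" if i: "i < j" for i
    proof
      assume "(of_nat ?q ^ j - of_nat ?q ^ i :: complex) = 0"
      then have "(of_nat (?q ^ j) :: complex) = of_nat (?q ^ i)" by simp
      then have "?q ^ j = ?q ^ i" by (simp only: of_nat_eq_iff)
      moreover have "?q ^ i < ?q ^ j" using card_ge2[where 'a='a] i by (intro power_strict_increasing) auto
      ultimately show False by simp
    qed
    then show ?thesis unfolding D_def by (simp add: prod_zero_iff)
  qed
  have "HC_ind n j (tensor_char (reg_GL j) triv_char) g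
      = (1 / (D * of_nat U)) * ((of_nat (card (tuples n j Kg)) * of_nat U) * D)"
    unfolding HC c_def cS cP cG of_nat_mult TW TJ ..
  also have "\<dots> = of_nat (card (tuples n j Kg))" using D0 U0 by (simp add: field_simps)
  finally show ?thesis unfolding TK .
qed

end
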